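(* Let $f\in\mathbb{R}[x,y]$ be irreducible and suppose $X=V(f)\subseteq\mathbb{R}^2$ is compact and connected. Let $q\in X$ be a singular point ($\frac{\partial f}{\partial x}(q)=\frac{\partial f}{\partial y}(q)=0$) and let $B(q)$ be an open ball centered at $q$ containing no other singular point of $X$ and such that $\frac{\partial f}{\partial x}(p)\neq0$ and $\frac{\partial f}{\partial y}(p)\neq0$ for every $p\in X\cap\overline{B(q)}$, $p\neq q$. Let $P$ be a connected component of $X\cap(B(q)\setminus\{q\})$ whose two endpoints (the points of $\overline{P}\setminus P$) are $q$ and a point of $\partial B(q)$. Then $P$ is the graph of a real analytic function $g$ on an open interval $I=(a,b)$ with $-\infty<a<b<\infty$; moreover $g$ has no critical points and at most finitely many strict inflection points in $I$.
   Context: A strict inflection point of $g$ is a point of $I$ at which $g''$ changes sign (the concavity of $g$ changes). *)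

theory Defs
  imports "HOL-Analysis.Analysis" "HOL-Computational_Algebra.Polynomial"
begin

text \<open>A bivariate real polynomial f in R[x,y] is represented as an element of
  (R[x])[y], i.e. a polynomial in y whose coefficients are polynomials in x.
  This ring is isomorphic to R[x,y].\<close>

definition eval2 :: "real poly poly \<Rightarrow> real \<times> real \<Rightarrow> real" where
  "eval2 f p = poly (map_poly (\<lambda>c. poly c (fst p)) f) (snd p)"

definition pdx :: "real poly poly \<Rightarrow> real poly poly" where
  "pdx f = map_poly pderiv f"

definition pdy :: "real poly poly \<Rightarrow> real poly poly" where
  "pdy f = pderiv f"

definition zero_set :: "real poly poly \<Rightarrow> (real \<times> real) set" where
  "zero_set f = {p. eval2 f p = 0}"

definition singular_point :: "real poly poly \<Rightarrow> real \<times> real \<Rightarrow> bool" where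
  "singular_point f p \<longleftrightarrow> eval2 f p = 0 \<and> eval2 (pdx f) p = 0 \<and> eval2 (pdy f) p = 0"

definition real_analytic_on :: "(real \<Rightarrow> real) \<Rightarrow> real set \<Rightarrow> bool" where
  "real_analytic_on g I \<longleftrightarrow>
     (\<forall>x\<in>I. \<exists>d>0. \<exists>c::nat \<Rightarrow> real. \<forall>y. \<bar>y - x\<bar> < d \<longrightarrow> (\<lambda>n. c n * (y - x) ^ n) sums g y)"

definition strict_inflection :: "(real \<Rightarrow> real) \<Rightarrow> real set \<Rightarrow> real \<Rightarrow> bool" where
  "strict_inflection g I x \<longleftrightarrow> x \<in> I \<and>
     (\<exists>d>0. {x - d<..<x + d} \<subseteq> I \<and>
        ((\<forall>t\<in>{x - d<..<x}. deriv (deriv g) t > 0) \<and> (\<forall>t\<in>{x<..<x + d}. deriv (deriv g) t < 0) \<or>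
         (\<forall>t\<in>{x - d<..<x}. deriv (deriv g) t < 0) \<and> (\<forall>t\<in>{x<..<x + d}. deriv (deriv g) t > 0)))"

end

theory Submission
  imports Defs "HOL-Computational_Algebra.Computational_Algebra" "HOL-Computational_Algebra.Field_as_Ring" "HOL-Complex_Analysis.Complex_Analysis"
begin

definition gev :: "'a::comm_ring_1 poly poly \<Rightarrow> 'a \<Rightarrow> 'a \<Rightarrow> 'a" where
  "gev F x y = poly (poly F [:y:]) x"

lemma gev_pCons [simp]: "gev (pCons c F) x y = poly c x + y * gev F x y"
  by (simp add: gev_def)
lemma gev_0 [simp]: "gev 0 x y = 0" by (simp add: gev_def)
lemma gev_add [simp]: "gev (F + G) x y = gev F x y + gev G x y" by (simp add: gev_def)
lemma gev_diff [simp]: "gev (F - G) x y = gev F x y - gev G x y" by (simp add: gev_def)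
lemma gev_mult [simp]: "gev (F * G) x y = gev F x y * gev G x y" by (simp add: gev_def)
lemma gev_const [simp]: "gev [:c:] x y = poly c x" by (simp add: gev_def)
lemma gev_1 [simp]: "gev 1 x y = 1" by (simp add: gev_def)
lemma gev_power [simp]: "gev (F ^ n) x y = gev F x y ^ n" by (induction n) auto

lemma eval2_gev: "eval2 f p = gev f (fst p) (snd p)"
proof (induction f rule: pCons_induct)
  case 0 then show ?case by (simp add: eval2_def)
next
  case (pCons c f)
  have "map_poly (\<lambda>c. poly c (fst p)) (pCons c f) = pCons (poly c (fst p)) (map_poly (\<lambda>c. poly c (fst p)) f)"
    by (rule map_poly_pCons) simp
  then show ?case using pCons by (simp add: eval2_def)
qed

lemma gev_deriv_y:
  fixes F :: "'a::real_normed_field poly poly"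
  shows "((\<lambda>y. gev F x y) has_field_derivative gev (pderiv F) x y) (at y within S)"
proof (induction F rule: pCons_induct)
  case 0 then show ?case by simp
next
  case (pCons c F)
  have "((\<lambda>y. poly c x + y * gev F x y) has_field_derivative 0 + (1 * gev F x y + gev (pderiv F) x y * y)) (at y within S)"
    by (rule DERIV_add[OF DERIV_const DERIV_mult[OF DERIV_ident pCons.IH]])
  then show ?case by (simp add: pderiv_pCons algebra_simps)
qed

lemma map_poly_pderiv_pCons: "map_poly pderiv (pCons c F) = pCons (pderiv c) (map_poly pderiv F)"
  by (rule map_poly_pCons) simp

lemma gev_deriv_chain:
  fixes F :: "'a::real_normed_field poly poly"
  assumes "(v has_field_derivative v') (at t within S)"
  shows "((\<lambda>s. gev F s (v s)) has_field_derivative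
           gev (map_poly pderiv F) t (v t) + gev (pderiv F) t (v t) * v') (at t within S)"
proof (induction F rule: pCons_induct)
  case 0 then show ?case by simp
next
  case (pCons c F)
  have "((\<lambda>s. poly c s + v s * gev F s (v s)) has_field_derivative
     poly (pderiv c) t + (v' * gev F t (v t) + (gev (map_poly pderiv F) t (v t) + gev (pderiv F) t (v t) * v') * v t)) (at t within S)"
    by (rule DERIV_add[OF poly_DERIV[THEN DERIV_subset] DERIV_mult[OF assms pCons.IH]]) simp
  then show ?case by (simp add: pderiv_pCons map_poly_pderiv_pCons algebra_simps)
qed

lemma continuous_gev:
  fixes F :: "'a::real_normed_field poly poly"
  assumes "continuous G u" "continuous G v"
  shows "continuous G (\<lambda>s. gev F (u s) (v s))"
proof (induction F rule: pCons_induct)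
  case 0 then show ?case by simp
next
  case (pCons c F)
  show ?case by (simp, intro continuous_intros assms pCons)
qed

definition cpol :: "real poly poly \<Rightarrow> complex poly poly" where
  "cpol f = map_poly (map_poly of_real) f"

lemma cpol_pCons [simp]: "cpol (pCons c f) = pCons (map_poly of_real c) (cpol f)"
  unfolding cpol_def by (rule map_poly_pCons) simp
lemma cpol_0 [simp]: "cpol 0 = 0" by (simp add: cpol_def)

lemma poly_of_real_map: "poly (map_poly of_real c) (of_real x :: complex) = of_real (poly c x)"
proof (induction c rule: pCons_induct)
  case 0 then show ?case by simp
next
  case (pCons a c)
  have "map_poly (of_real :: real \<Rightarrow> complex) (pCons a c) = pCons (of_real a) (map_poly of_real c)"
    by (rule map_poly_pCons) simp
  then show ?case using pCons by simp
qed

lemma gev_cpol: "gev (cpol f) (of_real x) (of_real y) = of_real (gev f x y)"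
  by (induction f rule: pCons_induct) (simp_all add: poly_of_real_map)

lemma map_of_real_add: "map_poly (of_real :: real \<Rightarrow> complex) (p + q) = map_poly of_real p + map_poly of_real q"
  by (intro poly_eqI) (simp add: coeff_map_poly)

lemma cpol_add: "cpol (f + g) = cpol f + cpol g"
  by (intro poly_eqI) (simp add: cpol_def coeff_map_poly map_of_real_add)

lemma pderiv_cpol: "pderiv (cpol f) = cpol (pderiv f)"
proof (induction f rule: pCons_induct)
  case 0 then show ?case by simp
next
  case (pCons c f)
  then show ?case by (simp add: pderiv_pCons cpol_add)
qed



lemma dist_pair_le: "dist (a, b) (c, d) \<le> dist a c + dist b d"
  by (simp add: dist_Pair_Pair sqrt_sum_squares_le_sum)

lemma cmod_of_real_diff: "cmod (complex_of_real a - complex_of_real b) = \<bar>a - b\<bar>"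
  by (metis norm_of_real of_real_diff)

lemma implicit_holo:
  fixes f :: "real poly poly" and x0 y0 \<epsilon> :: real
  assumes f0: "gev f x0 y0 = 0" and fy: "gev (pderiv f) x0 y0 \<noteq> 0" and eps: "\<epsilon> > 0"
  obtains \<delta> \<rho> W where "\<delta> > 0" "\<rho> > 0" "\<rho> < \<epsilon>" "W holomorphic_on ball (complex_of_real x0) \<delta>"
    "\<And>x. \<bar>x - x0\<bar> < \<delta> \<Longrightarrow> Im (W (of_real x)) = 0 \<and> \<bar>Re (W (of_real x)) - y0\<bar> \<le> \<rho> \<and> gev f x (Re (W (of_real x))) = 0"
    "\<And>x y. \<bar>x - x0\<bar> < \<delta> \<Longrightarrow> \<bar>y - y0\<bar> \<le> \<rho> \<Longrightarrow> gev f x y = 0 \<Longrightarrow> y = Re (W (of_real x))"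
proof -
  define Fc where "Fc = cpol f"
  define c where "c = complex_of_real (gev (pderiv f) x0 y0)"
  have c0: "c \<noteq> 0" unfolding c_def using fy by simp
  have c_eq: "gev (pderiv Fc) (of_real x0) (of_real y0) = c"
    by (simp add: Fc_def pderiv_cpol gev_cpol c_def)
  define T where "T z w = w - gev Fc z w / c" for z w
  define p0 where "p0 = (complex_of_real x0, complex_of_real y0)"
  have "continuous (at p0) (\<lambda>p. 1 - gev (pderiv Fc) (fst p) (snd p) / c)"
    using c0 by (intro continuous_intros continuous_gev continuous_fst continuous_snd continuous_ident) auto
  then obtain \<eta> where \<eta>: "\<eta> > 0" "\<And>p. dist p p0 < \<eta> \<Longrightarrow>
      dist (1 - gev (pderiv Fc) (fst p) (snd p) / c) (1 - gev (pderiv Fc) (fst p0) (snd p0) / c) < 1/2"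
    unfolding continuous_at_eps_delta by (metis half_gt_zero_iff zero_less_one)
  have K1: "cmod (1 - gev (pderiv Fc) z w / c) \<le> 1/2"
    if "cmod (z - x0) < \<eta>/2" "cmod (w - y0) < \<eta>/2" for z w :: complex
  proof -
    have "dist (z, w) p0 \<le> dist z (of_real x0) + dist w (of_real y0)"
      unfolding p0_def by (rule dist_pair_le)
    also have "\<dots> < \<eta>" using that by (simp add: dist_norm)
    finally have "dist (1 - gev (pderiv Fc) z w / c) (1 - gev (pderiv Fc) (fst p0) (snd p0) / c) < 1/2"
      using \<eta>(2)[of "(z,w)"] by simp
    then show ?thesis using c_eq c0 by (simp add: p0_def dist_norm)
  qed
  define \<rho> where "\<rho> = min (\<eta>/2) \<epsilon> / 2"
  have \<rho>: "\<rho> > 0" "\<rho> < \<epsilon>" "\<rho> < \<eta>/2" using \<eta> eps by (auto simp: \<rho>_def)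
  have "continuous (at (complex_of_real x0)) (\<lambda>z. gev Fc z (of_real y0) / c)"
    using c0 by (intro continuous_intros continuous_gev continuous_ident) auto
  moreover have "gev Fc (of_real x0) (of_real y0) = 0" using f0 by (simp add: Fc_def gev_cpol)
  ultimately have "\<forall>e>0. \<exists>d>0. \<forall>z. dist z (of_real x0) < d \<longrightarrow> cmod (gev Fc z (of_real y0) / c) < e"
    unfolding continuous_at_eps_delta by (simp add: dist_norm)
  then obtain \<delta>0 where \<delta>0: "\<delta>0 > 0" "\<And>z. dist z (of_real x0) < \<delta>0 \<Longrightarrow> cmod (gev Fc z (of_real y0) / c) < \<rho>/2"
    using half_gt_zero[OF \<rho>(1)] by blast
  define \<delta> where "\<delta> = min \<delta>0 (\<eta>/2)"
  have \<delta>: "\<delta> > 0" using \<delta>0 \<eta> by (simp add: \<delta>_def)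
  define A where "A = ball (complex_of_real x0) \<delta>"
  have zA: "cmod (z - x0) < \<eta>/2" "cmod (gev Fc z (of_real y0) / c) < \<rho>/2" if "z \<in> A" for z
  proof -
    show "cmod (z - x0) < \<eta>/2" using that by (simp add: A_def \<delta>_def dist_norm norm_minus_commute)
    show "cmod (gev Fc z (of_real y0) / c) < \<rho>/2" using that \<delta>0(2)[of z]
      by (simp add: A_def \<delta>_def dist_norm norm_minus_commute)
  qed
  define C where "C = cball (complex_of_real y0) \<rho>"
  have memC: "w \<in> C \<longleftrightarrow> cmod (w - y0) \<le> \<rho>" for w
    by (simp add: C_def dist_norm norm_minus_commute)
  have Tder: "(T z has_field_derivative (1 - gev (pderiv Fc) z w / c)) (at w within S)" for z w S
  proof -
    have "((\<lambda>w. w - gev Fc z w / c) has_field_derivative (1 - gev (pderiv Fc) z w / c)) (at w within S)"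
      by (intro DERIV_diff DERIV_ident DERIV_cdivide gev_deriv_y)
    then show ?thesis by (simp add: T_def[abs_def])
  qed
  have K2: "cmod (T z w - T z w') \<le> 1/2 * cmod (w - w')" if "z \<in> A" "w \<in> C" "w' \<in> C" for z w w'
  proof (rule field_differentiable_bound[of C])
    show "convex C" by (simp add: C_def)
    show "(T z has_field_derivative (1 - gev (pderiv Fc) z u / c)) (at u within C)" for u by (rule Tder)
    show "cmod (1 - gev (pderiv Fc) z u / c) \<le> 1/2" if "u \<in> C" for u
      using K1[of z u] zA[OF \<open>z \<in> A\<close>] that \<rho> by (simp add: memC)
  qed (use that in auto)
  have K3: "T z w \<in> C" if "z \<in> A" "w \<in> C" for z w
  proof -
    have "cmod (T z w - y0) \<le> cmod (T z w - T z y0) + cmod (T z y0 - y0)"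
      by (rule norm_diff_triangle_le[OF order_refl order_refl])
    also have "\<dots> \<le> 1/2 * cmod (w - y0) + \<rho>/2"
      using K2[OF that(1,2), of "of_real y0"] zA[OF that(1)] \<rho> by (intro add_mono) (auto simp: memC T_def)
    also have "\<dots> \<le> \<rho>" using that(2) by (simp add: memC)
    finally show ?thesis by (simp add: memC)
  qed
  define Wn where "Wn n z = (T z ^^ n) (of_real y0)" for n z
  have Wn_Suc: "Wn (Suc n) z = T z (Wn n z)" for n z by (simp add: Wn_def)
  have Wn_0: "Wn 0 z = of_real y0" for z by (simp add: Wn_def)
  have K4: "Wn n z \<in> C" if "z \<in> A" for n z
  proof (induction n)
    case 0 then show ?case using \<rho> by (simp add: Wn_0 memC)
  next
    case (Suc n) then show ?case using K3[OF that] by (simp add: Wn_Suc)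
  qed
  have K5: "cmod (Wn (Suc n) z - Wn n z) \<le> (1/2)^n * (\<rho>/2)" if "z \<in> A" for n z
  proof (induction n)
    case 0 then show ?case using zA[OF that] by (simp add: Wn_Suc Wn_0 T_def)
  next
    case (Suc n)
    have "cmod (T z (Wn (Suc n) z) - T z (Wn n z)) \<le> 1/2 * cmod (Wn (Suc n) z - Wn n z)"
      by (rule K2[OF that K4[OF that] K4[OF that]])
    then have "cmod (Wn (Suc (Suc n)) z - Wn (Suc n) z) \<le> 1/2 * cmod (Wn (Suc n) z - Wn n z)"
      by (simp only: Wn_Suc[of "Suc n"] Wn_Suc[of n])
    also have "\<dots> \<le> 1/2 * ((1/2)^n * (\<rho>/2))" using Suc by simp
    finally show ?case by simp
  qed
  have Wn_holo: "Wn n holomorphic_on UNIV" for n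
  proof (induction n)
    case 0 then show ?case by (simp add: Wn_0)
  next
    case (Suc n)
    show ?case unfolding holomorphic_on_open[OF open_UNIV]
    proof
      fix z :: complex
      have d: "(Wn n has_field_derivative deriv (Wn n) z) (at z)"
        using holomorphic_derivI[OF Suc open_UNIV] by blast
      have "((\<lambda>z. Wn n z - gev Fc z (Wn n z) / c) has_field_derivative
          deriv (Wn n) z - (gev (map_poly pderiv Fc) z (Wn n z) + gev (pderiv Fc) z (Wn n z) * deriv (Wn n) z) / c) (at z)"
        by (intro DERIV_diff d DERIV_cdivide gev_deriv_chain)
      then show "\<exists>f'. (Wn (Suc n) has_field_derivative f') (at z)"
        unfolding Wn_Suc T_def by blast
    qed
  qed
  define u where "u k z = Wn (Suc k) z - Wn k z" for k z
  define W where "W z = of_real y0 + (\<Sum>k. u k z)" for z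
  have "uniform_limit A (\<lambda>n z. \<Sum>k<n. u k z) (\<lambda>z. \<Sum>k. u k z) sequentially"
  proof (rule Weierstrass_m_test)
    show "norm (u k z) \<le> (1/2)^k * (\<rho>/2)" if "z \<in> A" for k z using K5[OF that] by (simp add: u_def)
    show "summable (\<lambda>k. (1/2::real)^k * (\<rho>/2))" by (intro summable_mult2 summable_geometric) simp
  qed
  then have "uniform_limit A (\<lambda>n z. of_real y0 + (\<Sum>k<n. u k z)) W sequentially"
    unfolding W_def by (rule uniform_limit_add[OF uniform_limit_const])
  moreover have "(\<lambda>n z. of_real y0 + (\<Sum>k<n. u k z)) = Wn"
  proof (intro ext)
    fix n z
    show "of_real y0 + (\<Sum>k<n. u k z) = Wn n z"
      using sum_lessThan_telescope[of "\<lambda>k. Wn k z" n] by (simp add: u_def Wn_0)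
  qed
  ultimately have unif: "uniform_limit A Wn W sequentially" by (simp only:)
  have Wholo: "W holomorphic_on A"
  proof (rule holomorphic_uniform_sequence[of A Wn])
    show "open A" by (simp add: A_def)
    show "Wn n holomorphic_on A" for n by (rule holomorphic_on_subset[OF Wn_holo subset_UNIV])
    show "\<exists>d>0. cball x d \<subseteq> A \<and> uniform_limit (cball x d) Wn W sequentially" if "x \<in> A" for x
    proof -
      have "\<exists>d>0. cball x d \<subseteq> A" using \<open>open A\<close> that unfolding open_contains_cball by blast
      then obtain d where d: "d > 0" "cball x d \<subseteq> A" by blast
      have "uniform_limit (cball x d) Wn W sequentially" by (rule uniform_limit_on_subset[OF unif d(2)])
      then show ?thesis using d by blast
    qed
  qed
  have lim: "(\<lambda>n. Wn n z) \<longlonglongrightarrow> W z" if "z \<in> A" for z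
    by (rule tendsto_uniform_limitI[OF unif that])
  have WC: "W z \<in> C" if "z \<in> A" for z
    by (rule Lim_in_closed_set[OF _ _ _ lim[OF that]]) (use K4 that in \<open>auto simp: C_def\<close>)
  have Wfix: "T z (W z) = W z" if "z \<in> A" for z
  proof -
    have "isCont (T z) (W z)" using Tder by (rule DERIV_isCont)
    then have "(\<lambda>n. T z (Wn n z)) \<longlonglongrightarrow> T z (W z)" using lim[OF that] isCont_tendsto_compose by blast
    moreover have "(\<lambda>n. T z (Wn n z)) \<longlonglongrightarrow> W z"
      using LIMSEQ_Suc[OF lim[OF that]] by (simp add: Wn_Suc)
    ultimately show ?thesis using LIMSEQ_unique by blast
  qed
  have Wzero: "gev Fc z (W z) = 0" if "z \<in> A" for z
    using Wfix[OF that] c0 by (simp add: T_def)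
  have Wuniq: "w = W z" if "z \<in> A" "w \<in> C" "gev Fc z w = 0" for z w
  proof -
    have "T z w = w" using that by (simp add: T_def)
    then have "cmod (w - W z) \<le> 1/2 * cmod (w - W z)"
      using K2[OF that(1,2) WC[OF that(1)]] Wfix[OF that(1)] by simp
    then show ?thesis by simp
  qed
  have real_it: "\<exists>r. Wn n (complex_of_real x) = of_real r" for n x
  proof (induction n)
    case 0 then show ?case by (simp add: Wn_0)
  next
    case (Suc n)
    then obtain r where "Wn n (complex_of_real x) = of_real r" by blast
    then have "Wn (Suc n) (complex_of_real x) = of_real (r - gev f x r / gev (pderiv f) x0 y0)"
      by (simp add: Wn_Suc T_def Fc_def gev_cpol c_def)
    then show ?case by blast
  qed
  have xA: "complex_of_real x \<in> A" if "\<bar>x - x0\<bar> < \<delta>" for x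
  proof -
    have "dist (complex_of_real x0) (of_real x) = \<bar>x0 - x\<bar>" unfolding dist_norm by (rule cmod_of_real_diff)
    also have "\<dots> = \<bar>x - x0\<bar>" by (rule abs_minus_commute)
    finally show ?thesis using that unfolding A_def mem_ball by simp
  qed
  have realW: "W (of_real x) = of_real (Re (W (of_real x)))" if "\<bar>x - x0\<bar> < \<delta>" for x
  proof -
    have "(\<lambda>n. Im (Wn n (of_real x))) \<longlonglongrightarrow> Im (W (of_real x))"
      by (rule tendsto_Im[OF lim[OF xA[OF that]]])
    moreover have "(\<lambda>n. Im (Wn n (complex_of_real x))) = (\<lambda>n. 0)"
    proof
      fix n
      obtain r where "Wn n (complex_of_real x) = of_real r" using real_it by blast
      then show "Im (Wn n (complex_of_real x)) = 0" by simp
    qed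
    ultimately have "(\<lambda>n. 0::real) \<longlonglongrightarrow> Im (W (of_real x))" by (simp only:)
    then have "Im (W (of_real x)) = 0" by (simp add: LIMSEQ_const_iff)
    then show ?thesis by (simp add: complex_eq_iff)
  qed
  show ?thesis
  proof (rule that[of \<delta> \<rho> W])
    show "W holomorphic_on ball (complex_of_real x0) \<delta>" using Wholo by (simp add: A_def)
    show "Im (W (of_real x)) = 0 \<and> \<bar>Re (W (of_real x)) - y0\<bar> \<le> \<rho> \<and> gev f x (Re (W (of_real x))) = 0"
      if "\<bar>x - x0\<bar> < \<delta>" for x
    proof -
      define r where "r = Re (W (of_real x))"
      have Wr: "W (of_real x) = of_real r" unfolding r_def by (rule realW[OF that])
      have "cmod (W (of_real x) - of_real y0) \<le> \<rho>" using WC[OF xA[OF that]] by (simp add: memC)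
      then have 1: "\<bar>r - y0\<bar> \<le> \<rho>" unfolding Wr by (simp add: cmod_of_real_diff)
      have "gev Fc (of_real x) (of_real r) = 0" using Wzero[OF xA[OF that]] unfolding Wr .
      then have 2: "gev f x r = 0" by (simp add: Fc_def gev_cpol)
      show ?thesis using 1 2 Wr by (simp add: r_def[symmetric])
    qed
    show "y = Re (W (of_real x))" if "\<bar>x - x0\<bar> < \<delta>" "\<bar>y - y0\<bar> \<le> \<rho>" "gev f x y = 0" for x y
    proof -
      have "complex_of_real y \<in> C" using that(2) by (simp add: memC cmod_of_real_diff)
      moreover have "gev Fc (of_real x) (of_real y) = 0" using that(3) by (simp add: Fc_def gev_cpol)
      ultimately have "complex_of_real y = W (of_real x)" using Wuniq xA[OF that(1)] by blast
      then have "Re (complex_of_real y) = Re (W (of_real x))" by simp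
      then show ?thesis by simp
    qed
  qed (use \<delta> \<rho> in auto)
qed



lemma re_holo_deriv:
  assumes "W holomorphic_on S" "open S" "complex_of_real t \<in> S"
  shows "((\<lambda>s. Re (W (of_real s))) has_real_derivative Re (deriv W (of_real t))) (at t)"
proof -
  have "(W has_field_derivative deriv W (of_real t)) (at (of_real t))"
    by (rule holomorphic_derivI[OF assms])
  then have "((\<lambda>x. W (of_real x)) has_vector_derivative deriv W (of_real t)) (at t within UNIV)"
    by (rule has_vector_derivative_real_field)
  then show ?thesis by (rule has_field_derivative_Re)
qed

lemma re_holo_series:
  assumes "W holomorphic_on ball (complex_of_real x0) d" "\<bar>y - x0\<bar> < d"
  shows "(\<lambda>n. Re ((deriv ^^ n) W (of_real x0) / fact n) * (y - x0) ^ n) sums Re (W (of_real y))"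
proof -
  have "complex_of_real y \<in> ball (of_real x0) d"
    using assms(2) by (simp add: dist_norm cmod_of_real_diff abs_minus_commute)
  from holomorphic_power_series[OF assms(1) this]
  have "(\<lambda>n. (deriv ^^ n) W (of_real x0) / fact n * (of_real y - of_real x0) ^ n) sums W (of_real y)" .
  then have "(\<lambda>n. Re ((deriv ^^ n) W (of_real x0) / fact n * (of_real y - of_real x0) ^ n)) sums Re (W (of_real y))"
    by (rule sums_Re)
  moreover have "Re (a * (complex_of_real y - of_real x0) ^ n) = Re a * (y - x0) ^ n" for a n
  proof -
    have "(complex_of_real y - of_real x0) ^ n = of_real ((y - x0) ^ n)" by simp
    then show ?thesis by simp
  qed
  then have "(\<lambda>n. Re ((deriv ^^ n) W (of_real x0) / fact n * (of_real y - of_real x0) ^ n)) =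
     (\<lambda>n. Re ((deriv ^^ n) W (of_real x0) / fact n) * (y - x0) ^ n)" by (intro ext)
  ultimately show ?thesis by (simp only:)
qed

definition LP :: "(real \<times> real) set \<Rightarrow> real \<times> real \<Rightarrow> real \<Rightarrow> real \<Rightarrow> (real \<Rightarrow> real) \<Rightarrow> bool" where
  "LP S p \<delta> \<rho> w \<longleftrightarrow> \<delta> > 0 \<and> \<rho> > 0 \<and> continuous_on (ball (fst p) \<delta>) w \<and> w (fst p) = snd p \<and>
     (\<forall>x\<in>ball (fst p) \<delta>. (x, w x) \<in> S) \<and>
     (\<forall>x y. x \<in> ball (fst p) \<delta> \<longrightarrow> \<bar>y - snd p\<bar> < \<rho> \<longrightarrow> (x, y) \<in> S \<longrightarrow> y = w x)"

lemma ball_of_real_iff: "complex_of_real y \<in> ball (of_real x0) d \<longleftrightarrow> \<bar>y - x0\<bar> < d"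
proof -
  have "dist (complex_of_real x0) (of_real y) = \<bar>x0 - y\<bar>" unfolding dist_norm by (rule cmod_of_real_diff)
  also have "\<dots> = \<bar>y - x0\<bar>" by (rule abs_minus_commute)
  finally show ?thesis by simp
qed

lemma ball_real_iff: "x \<in> ball (x0::real) d \<longleftrightarrow> \<bar>x - x0\<bar> < d"
proof -
  have "dist x0 x = \<bar>x - x0\<bar>" unfolding dist_real_def by (rule abs_minus_commute)
  then show ?thesis by simp
qed

lemma local_box:
  fixes f :: "real poly poly"
  assumes f0: "gev f x0 y0 = 0" and fy: "gev (pderiv f) x0 y0 \<noteq> 0" and e: "e > 0"
  obtains \<delta> \<rho> W where "LP ({p. gev f (fst p) (snd p) = 0} \<inter> ball (x0, y0) e) (x0, y0) \<delta> \<rho> (\<lambda>x. Re (W (of_real x)))"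
    "W holomorphic_on ball (complex_of_real x0) \<delta>"
proof -
  have e2: "e/2 > 0" using e by simp
  obtain \<delta> \<rho> W where d: "\<delta> > 0" "\<rho> > 0" "\<rho> < e/2" "W holomorphic_on ball (complex_of_real x0) \<delta>"
    "\<And>x. \<bar>x - x0\<bar> < \<delta> \<Longrightarrow> Im (W (of_real x)) = 0 \<and> \<bar>Re (W (of_real x)) - y0\<bar> \<le> \<rho> \<and> gev f x (Re (W (of_real x))) = 0"
    "\<And>x y. \<bar>x - x0\<bar> < \<delta> \<Longrightarrow> \<bar>y - y0\<bar> \<le> \<rho> \<Longrightarrow> gev f x y = 0 \<Longrightarrow> y = Re (W (of_real x))"
    by (rule implicit_holo[OF f0 fy e2]) blast
  define \<delta>' where "\<delta>' = min \<delta> (e/2)"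
  have \<delta>': "\<delta>' > 0" "\<delta>' \<le> \<delta>" "\<delta>' \<le> e/2" using d e by (auto simp: \<delta>'_def)
  have H: "W holomorphic_on ball (complex_of_real x0) \<delta>'"
    by (rule holomorphic_on_subset[OF d(4)]) (simp add: \<delta>' subset_ball)
  have cont: "continuous_on (ball x0 \<delta>') (\<lambda>x. Re (W (of_real x)))"
  proof (rule continuous_at_imp_continuous_on, intro ballI)
    fix x assume "x \<in> ball x0 \<delta>'"
    then have "complex_of_real x \<in> ball (of_real x0) \<delta>'"
      by (simp only: ball_of_real_iff ball_real_iff)
    from re_holo_deriv[OF H _ this] show "isCont (\<lambda>x. Re (W (of_real x))) x"
      by (simp add: DERIV_isCont)
  qed
  show ?thesis
  proof (rule that[OF _ H], unfold LP_def fst_conv snd_conv, intro conjI ballI allI impI)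
    show "\<delta>' > 0" "\<rho> > 0" by (fact \<delta>'(1)) (fact d(2))
    show "continuous_on (ball x0 \<delta>') (\<lambda>x. Re (W (of_real x)))" using cont by simp
    show "Re (W (of_real x0)) = y0"
      using d(6)[of x0 y0] d(1) d(2) f0 by simp
    fix x assume x: "x \<in> ball x0 \<delta>'"
    then have ax': "\<bar>x - x0\<bar> < \<delta>'" by (simp only: ball_real_iff)
    then have ax: "\<bar>x - x0\<bar> < \<delta>" and ax2: "\<bar>x - x0\<bar> < e/2" using \<delta>' by linarith+
    show "(x, Re (W (of_real x))) \<in> {p. gev f (fst p) (snd p) = 0} \<inter> ball (x0, y0) e"
    proof
      show "(x, Re (W (of_real x))) \<in> {p. gev f (fst p) (snd p) = 0}" using d(5)[OF ax] by simp
      have "dist (x, Re (W (of_real x))) (x0, y0) \<le> dist x x0 + dist (Re (W (of_real x))) y0"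
        by (rule dist_pair_le)
      also have "\<dots> < e/2 + e/2" using ax2 d(5)[OF ax] d(3)
        unfolding dist_real_def by linarith
      finally show "(x, Re (W (of_real x))) \<in> ball (x0, y0) e" by (simp add: dist_commute)
    qed
    fix y assume "\<bar>y - y0\<bar> < \<rho>" "(x, y) \<in> {p. gev f (fst p) (snd p) = 0} \<inter> ball (x0, y0) e"
    then show "y = Re (W (of_real x))" using d(6)[OF ax, of y] by simp
  qed
qed



lemma LP_unique:
  assumes "LP S p \<delta> \<rho> w" "x \<in> ball (fst p) \<delta>" "\<bar>y - snd p\<bar> < \<rho>" "(x, y) \<in> S"
  shows "y = w x"
  using assms unfolding LP_def by blast

lemma LP_in: "LP S p \<delta> \<rho> w \<Longrightarrow> x \<in> ball (fst p) \<delta> \<Longrightarrow> (x, w x) \<in> S"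
  unfolding LP_def by blast

lemma LP_pos: "LP S p \<delta> \<rho> w \<Longrightarrow> \<delta> > 0 \<and> \<rho> > 0"
  unfolding LP_def by blast

lemma LP_cont: "LP S p \<delta> \<rho> w \<Longrightarrow> continuous_on (ball (fst p) \<delta>) w"
  unfolding LP_def by blast

lemma LP_center: "LP S p \<delta> \<rho> w \<Longrightarrow> w (fst p) = snd p"
  unfolding LP_def by blast

lemma cont_near:
  fixes h :: "'a::metric_space \<Rightarrow> real"
  assumes "continuous_on A h" "t \<in> A" "e > 0"
  obtains d where "d > 0" "\<And>s. s \<in> A \<Longrightarrow> dist s t < d \<Longrightarrow> \<bar>h s - h t\<bar> < e"
proof -
  have "\<exists>d>0. \<forall>s\<in>A. dist s t < d \<longrightarrow> dist (h s) (h t) < e" using assms continuous_on_iff by blast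
  then obtain d where "d > 0" "\<forall>s\<in>A. dist s t < d \<longrightarrow> \<bar>h s - h t\<bar> < e" by (auto simp: dist_real_def)
  then show ?thesis using that by blast
qed

lemma UQ:
  fixes h1 h2 :: "real \<Rightarrow> real"
  assumes LU: "\<forall>p\<in>S. \<exists>\<delta> \<rho> w. LP S p \<delta> \<rho> w"
    and c1: "continuous_on (closed_segment a b) h1" and c2: "continuous_on (closed_segment a b) h2"
    and g: "\<And>t. t \<in> closed_segment a b \<Longrightarrow> (t, h1 t) \<in> S \<and> (t, h2 t) \<in> S"
    and ab: "h1 a = h2 a"
  shows "h1 b = h2 b"
proof -
  let ?A = "closed_segment a b"
  have "(h1 a = h2 a) = (h1 b = h2 b)"
  proof (rule connected_local_const[of ?A a b "\<lambda>t. h1 t = h2 t"])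
    show "connected ?A" by simp
    show "a \<in> ?A" "b \<in> ?A" by simp_all
    show "\<forall>t\<in>?A. \<forall>\<^sub>F s in at t within ?A. (h1 t = h2 t) = (h1 s = h2 s)"
    proof
      fix t assume t: "t \<in> ?A"
      show "\<forall>\<^sub>F s in at t within ?A. (h1 t = h2 t) = (h1 s = h2 s)"
      proof (cases "h1 t = h2 t")
        case True
        obtain \<delta> \<rho> w where L: "LP S (t, h1 t) \<delta> \<rho> w" using LU g[OF t] by blast
        have pos: "\<delta> > 0" "\<rho> > 0" using LP_pos[OF L] by auto
        obtain d1 where d1: "d1 > 0" "\<And>s. s \<in> ?A \<Longrightarrow> dist s t < d1 \<Longrightarrow> \<bar>h1 s - h1 t\<bar> < \<rho>"
          using cont_near[OF c1 t pos(2)] by blast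
        obtain d2 where d2: "d2 > 0" "\<And>s. s \<in> ?A \<Longrightarrow> dist s t < d2 \<Longrightarrow> \<bar>h2 s - h2 t\<bar> < \<rho>"
          using cont_near[OF c2 t pos(2)] by blast
        show ?thesis unfolding eventually_at
        proof (intro exI[of _ "min \<delta> (min d1 d2)"] conjI ballI impI)
          show "min \<delta> (min d1 d2) > 0" using pos d1 d2 by simp
          fix s assume s: "s \<in> ?A" "s \<noteq> t \<and> dist s t < min \<delta> (min d1 d2)"
          have sb: "s \<in> ball (fst (t, h1 t)) \<delta>" using s by (simp add: dist_commute)
          have "h1 s = w s" using LP_unique[OF L sb] d1(2)[of s] s g[of s] by simp
          moreover have "h2 s = w s" using LP_unique[OF L sb] d2(2)[of s] s g[of s] True by simp
          ultimately show "(h1 t = h2 t) = (h1 s = h2 s)" using True by simp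
        qed
      next
        case False
        define e where "e = \<bar>h1 t - h2 t\<bar> / 2"
        have e: "e > 0" using False by (simp add: e_def)
        obtain d1 where d1: "d1 > 0" "\<And>s. s \<in> ?A \<Longrightarrow> dist s t < d1 \<Longrightarrow> \<bar>h1 s - h1 t\<bar> < e"
          using cont_near[OF c1 t e] by blast
        obtain d2 where d2: "d2 > 0" "\<And>s. s \<in> ?A \<Longrightarrow> dist s t < d2 \<Longrightarrow> \<bar>h2 s - h2 t\<bar> < e"
          using cont_near[OF c2 t e] by blast
        show ?thesis unfolding eventually_at
        proof (intro exI[of _ "min d1 d2"] conjI ballI impI)
          show "min d1 d2 > 0" using d1 d2 by simp
          fix s assume s: "s \<in> ?A" "s \<noteq> t \<and> dist s t < min d1 d2"
          have "\<bar>h1 s - h1 t\<bar> < e" "\<bar>h2 s - h2 t\<bar> < e" using d1(2)[of s] d2(2)[of s] s by auto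
          then have "h1 s \<noteq> h2 s" unfolding e_def by (auto simp: abs_if split: if_split_asm)
          then show "(h1 t = h2 t) = (h1 s = h2 s)" using False by simp
        qed
      qed
    qed
  qed
  then show ?thesis using ab by simp
qed

lemma seg_1d_cases:
  fixes x0 x' x'' :: real
  shows "x'' \<in> closed_segment x0 x' \<or> x' \<in> closed_segment x0 x'' \<or> x0 \<in> closed_segment x' x''"
  by (auto simp: closed_segment_eq_real_ivl)

lemma seg_1d_union:
  fixes x0 x' x'' :: real
  assumes "x' \<in> closed_segment x0 x''"
  shows "closed_segment x0 x'' = closed_segment x0 x' \<union> closed_segment x' x''"
    and "\<And>t. t \<in> closed_segment x' x'' \<Longrightarrow> t \<in> closed_segment x0 x' \<Longrightarrow> t = x'"
  using assms by (auto simp: closed_segment_eq_real_ivl split: if_splits)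

definition Gset :: "(real \<times> real) set \<Rightarrow> real \<Rightarrow> real \<Rightarrow> (real \<times> real) set" where
  "Gset S x0 y0 = {(x, y). \<exists>h. continuous_on (closed_segment x0 x) h \<and> h x0 = y0 \<and> h x = y \<and>
       (\<forall>t\<in>closed_segment x0 x. (t, h t) \<in> S)}"

lemma G_step:
  assumes LU: "\<forall>p\<in>S. \<exists>\<delta> \<rho> w. LP S p \<delta> \<rho> w"
    and L: "LP S p \<delta> \<rho> w" and x': "x' \<in> ball (fst p) \<delta>" and x'': "x'' \<in> ball (fst p) \<delta>"
    and G: "(x', w x') \<in> Gset S x0 y0"
  shows "(x'', w x'') \<in> Gset S x0 y0"
proof -
  obtain h where h: "continuous_on (closed_segment x0 x') h" "h x0 = y0" "h x' = w x'"
    "\<And>t. t \<in> closed_segment x0 x' \<Longrightarrow> (t, h t) \<in> S"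
  proof -
    have "\<exists>h. continuous_on (closed_segment x0 x') h \<and> h x0 = y0 \<and> h x' = w x' \<and>
       (\<forall>t\<in>closed_segment x0 x'. (t, h t) \<in> S)" using G by (simp add: Gset_def)
    then show ?thesis using that by blast
  qed
  have wc: "continuous_on (ball (fst p) \<delta>) w" by (rule LP_cont[OF L])
  have sub: "closed_segment x' x'' \<subseteq> ball (fst p) \<delta>"
    by (rule closed_segment_subset[OF x' x'']) simp
  show ?thesis
  proof (cases "x'' \<in> closed_segment x0 x'")
    case True
    have sub2: "closed_segment x' x'' \<subseteq> closed_segment x0 x'"
      by (rule closed_segment_subset[OF _ True]) simp_all
    have "h x'' = w x''"
    proof (rule UQ[OF LU, of x' x''])
      show "continuous_on (closed_segment x' x'') h" using continuous_on_subset[OF h(1) sub2] .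
      show "continuous_on (closed_segment x' x'') w" using continuous_on_subset[OF wc sub] .
      show "(t, h t) \<in> S \<and> (t, w t) \<in> S" if "t \<in> closed_segment x' x''" for t
        using h(4) sub2 sub that LP_in[OF L] by blast
      show "h x' = w x'" by (fact h(3))
    qed
    moreover have sub3: "closed_segment x0 x'' \<subseteq> closed_segment x0 x'"
      by (rule closed_segment_subset[OF _ True]) simp_all
    ultimately show ?thesis unfolding Gset_def using h continuous_on_subset[OF h(1) sub3]
      by (intro CollectI case_prodI exI[of _ h]) blast
  next
    case False
    show ?thesis
    proof (cases "x' \<in> closed_segment x0 x''")
    case False
    then have x0m: "x0 \<in> closed_segment x' x''" using seg_1d_cases \<open>x'' \<notin> closed_segment x0 x'\<close> by blast
    have x0b: "x0 \<in> ball (fst p) \<delta>" using sub x0m by blast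
    have subA: "closed_segment x' x0 \<subseteq> closed_segment x0 x'" by (simp add: closed_segment_commute)
    have subB: "closed_segment x' x0 \<subseteq> ball (fst p) \<delta>" by (rule closed_segment_subset[OF x' x0b]) simp
    have subC: "closed_segment x0 x'' \<subseteq> ball (fst p) \<delta>" by (rule closed_segment_subset[OF x0b x'']) simp
    have "h x0 = w x0"
    proof (rule UQ[OF LU, of x' x0])
      show "continuous_on (closed_segment x' x0) h" using continuous_on_subset[OF h(1) subA] .
      show "continuous_on (closed_segment x' x0) w" using continuous_on_subset[OF wc subB] .
      show "(t, h t) \<in> S \<and> (t, w t) \<in> S" if "t \<in> closed_segment x' x0" for t
        using h(4) subA subB that LP_in[OF L] by blast
      show "h x' = w x'" by (fact h(3))
    qed
    then have "w x0 = y0" using h(2) by simp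
    then show ?thesis unfolding Gset_def using continuous_on_subset[OF wc subC] subC LP_in[OF L]
      by (intro CollectI case_prodI exI[of _ w]) blast
    next
    case True
    then have x'm: "x' \<in> closed_segment x0 x''" .
    note U = seg_1d_union[OF x'm]
    define h' where "h' t = (if t \<in> closed_segment x0 x' then h t else w t)" for t
    have "continuous_on (closed_segment x0 x' \<union> closed_segment x' x'') h'"
      unfolding h'_def
    proof (rule continuous_on_cases)
      show "continuous_on (closed_segment x' x'') w" using continuous_on_subset[OF wc sub] .
      show "\<forall>t. t \<in> closed_segment x0 x' \<and> t \<notin> closed_segment x0 x' \<or>
            t \<in> closed_segment x' x'' \<and> t \<in> closed_segment x0 x' \<longrightarrow> h t = w t"
        using U(2) h(3) by blast
    qed (simp_all add: h(1))
    then have c: "continuous_on (closed_segment x0 x'') h'" using U(1) by simp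
    have "h' x0 = y0" using h(2) by (simp add: h'_def)
    moreover have "h' x'' = w x''" using False by (simp add: h'_def)
    moreover have "(t, h' t) \<in> S" if "t \<in> closed_segment x0 x''" for t
    proof (cases "t \<in> closed_segment x0 x'")
      case True then show ?thesis using h(4) by (simp add: h'_def)
    next
      case False
      then have "t \<in> closed_segment x' x''" using that U(1) by blast
      then show ?thesis using False sub LP_in[OF L] by (auto simp: h'_def)
    qed
    ultimately show ?thesis unfolding Gset_def using c
      by (intro CollectI case_prodI exI[of _ h']) blast
    qed
  qed
qed

lemma P_sub_G:
  assumes LU: "\<forall>p\<in>S. \<exists>\<delta> \<rho> w. LP S p \<delta> \<rho> w"
    and P: "P \<in> components S" and p0: "(x0, y0) \<in> P"
  shows "P \<subseteq> Gset S x0 y0"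
proof
  fix q assume q: "q \<in> P"
  have PS: "P \<subseteq> S" using P in_components_subset by blast
  have p0G: "(x0, y0) \<in> Gset S x0 y0"
    unfolding Gset_def using p0 PS by (auto intro!: exI[of _ "\<lambda>_. y0"])
  have "((x0, y0) \<in> Gset S x0 y0) = (q \<in> Gset S x0 y0)"
  proof (rule connected_local_const[of P _ _ "\<lambda>p. p \<in> Gset S x0 y0"])
    show "connected P" using P in_components_connected by blast
    show "(x0, y0) \<in> P" "q \<in> P" by (fact p0) (fact q)
    show "\<forall>p\<in>P. \<forall>\<^sub>F p' in at p within P. (p \<in> Gset S x0 y0) = (p' \<in> Gset S x0 y0)"
    proof
      fix p assume p: "p \<in> P"
      obtain \<delta> \<rho> w where L: "LP S p \<delta> \<rho> w" using LU p PS by blast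
      have pos: "\<delta> > 0" "\<rho> > 0" using LP_pos[OF L] by auto
      show "\<forall>\<^sub>F p' in at p within P. (p \<in> Gset S x0 y0) = (p' \<in> Gset S x0 y0)"
        unfolding eventually_at
      proof (intro exI[of _ "min \<delta> \<rho>"] conjI ballI impI)
        show "min \<delta> \<rho> > 0" using pos by simp
        fix p' assume p': "p' \<in> P" "p' \<noteq> p \<and> dist p' p < min \<delta> \<rho>"
        have d1: "dist (fst p') (fst p) < \<delta>" using dist_fst_le[of p' p] p' by simp
        have d2: "dist (snd p') (snd p) < \<rho>" using dist_snd_le[of p' p] p' by simp
        have x'b: "fst p' \<in> ball (fst p) \<delta>" using d1 by (simp add: dist_commute)
        have xb: "fst p \<in> ball (fst p) \<delta>" using pos by simp
        have "snd p' = w (fst p')"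
          using LP_unique[OF L x'b, of "snd p'"] d2 p' PS by (auto simp: dist_real_def)
        then have e1: "p' = (fst p', w (fst p'))" by (simp add: prod_eq_iff)
        have e2: "p = (fst p, w (fst p))" using LP_center[OF L] by (simp add: prod_eq_iff)
        show "(p \<in> Gset S x0 y0) = (p' \<in> Gset S x0 y0)"
          using G_step[OF LU L xb x'b] G_step[OF LU L x'b xb] e1 e2 by metis
      qed
    qed
  qed
  then show "q \<in> Gset S x0 y0" using p0G by simp
qed

lemma P_graph_unique:
  assumes LU: "\<forall>p\<in>S. \<exists>\<delta> \<rho> w. LP S p \<delta> \<rho> w"
    and P: "P \<in> components S" and p0: "(x0, y0) \<in> P"
    and q1: "(x, y1) \<in> P" and q2: "(x, y2) \<in> P"
  shows "y1 = y2"
proof -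
  have "(x, y1) \<in> Gset S x0 y0" "(x, y2) \<in> Gset S x0 y0" using P_sub_G[OF LU P p0] q1 q2 by auto
  then obtain h1 h2 where h1: "continuous_on (closed_segment x0 x) h1" "h1 x0 = y0" "h1 x = y1"
    "\<forall>t\<in>closed_segment x0 x. (t, h1 t) \<in> S"
    and h2: "continuous_on (closed_segment x0 x) h2" "h2 x0 = y0" "h2 x = y2"
    "\<forall>t\<in>closed_segment x0 x. (t, h2 t) \<in> S"
    unfolding Gset_def by blast
  have "h1 x = h2 x" by (rule UQ[OF LU h1(1) h2(1)]) (use h1 h2 in auto)
  then show ?thesis using h1 h2 by simp
qed

lemma P_local_graph:
  assumes P: "P \<in> components S" and p: "p \<in> P" and L: "LP S p \<delta> \<rho> w"
  shows "(\<lambda>x. (x, w x)) ` ball (fst p) \<delta> \<subseteq> P"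
proof (rule components_maximal[OF P])
  show "connected ((\<lambda>x. (x, w x)) ` ball (fst p) \<delta>)"
    by (intro connected_continuous_image continuous_on_Pair continuous_on_id LP_cont[OF L]) simp
  show "(\<lambda>x. (x, w x)) ` ball (fst p) \<delta> \<subseteq> S" using LP_in[OF L] by blast
  have "p = (fst p, w (fst p))" using LP_center[OF L] by (simp add: prod_eq_iff)
  moreover have "fst p \<in> ball (fst p) \<delta>" using LP_pos[OF L] by simp
  ultimately have "p \<in> (\<lambda>x. (x, w x)) ` ball (fst p) \<delta>" by blast
  then show "P \<inter> (\<lambda>x. (x, w x)) ` ball (fst p) \<delta> \<noteq> {}" using p by blast
qed



lemma fract_repr:
  fixes c :: "real poly fract"
  obtains n d where "d \<noteq> 0" "c = to_fract n / to_fract d"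
proof -
  have "c = Fract (fst (quot_of_fract c)) (snd (quot_of_fract c))" by simp
  then have "c = to_fract (fst (quot_of_fract c)) / to_fract (snd (quot_of_fract c))"
    by (simp add: Fract_conv_to_fract)
  then show ?thesis using that snd_quot_of_fract_nonzero by blast
qed

lemma field_poly_bezout:
  fixes F G :: "'a::field poly"
  assumes irr: "irreducible F" and nd: "\<not> F dvd G"
  shows "\<exists>a b. a * F + b * G = 1"
proof -
  define I where "I = {a * F + b * G | a b. True}"
  have FI: "F \<in> I" unfolding I_def by (intro CollectI exI[of _ 1] exI[of _ 0]) simp
  have GI: "G \<in> I" unfolding I_def by (intro CollectI exI[of _ 0] exI[of _ 1]) simp
  have F0: "F \<noteq> 0" using irr by auto
  have ex: "\<exists>n m. m \<in> I \<and> m \<noteq> 0 \<and> degree m = n" using FI F0 by blast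
  define n where "n = (LEAST n. \<exists>m. m \<in> I \<and> m \<noteq> 0 \<and> degree m = n)"
  obtain m where m: "m \<in> I" "m \<noteq> 0" "degree m = n"
    using LeastI_ex[OF ex] unfolding n_def by blast
  have minimal: "degree m \<le> degree m'" if "m' \<in> I" "m' \<noteq> 0" for m'
    unfolding m(3) n_def using that by (intro Least_le) blast
  obtain a0 b0 where ab0: "m = a0 * F + b0 * G" using m(1) unfolding I_def by blast
  have dvdI: "m dvd x" if xI: "x \<in> I" for x
  proof -
    obtain a b where ab: "x = a * F + b * G" using xI unfolding I_def by blast
    have "x mod m = x - (x div m) * m" by (simp add: minus_div_mult_eq_mod)
    also have "\<dots> = (a - (x div m) * a0) * F + (b - (x div m) * b0) * G"
      unfolding ab ab0 by (simp add: algebra_simps)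
    finally have "x mod m \<in> I" unfolding I_def by blast
    moreover have "x mod m = 0 \<or> degree (x mod m) < degree m" using degree_mod_less[OF m(2)] by blast
    ultimately have "x mod m = 0" using minimal by fastforce
    then show ?thesis by (simp add: mod_eq_0_iff_dvd)
  qed
  obtain k where k: "F = m * k" using dvdI[OF FI] by blast
  have "is_unit m \<or> is_unit k" using irreducibleD[OF irr k] .
  moreover have "\<not> is_unit k"
  proof
    assume "is_unit k"
    then have "F dvd m" using k by (metis dvd_mult_unit_iff dvd_refl)
    then have "F dvd G" using dvdI[OF GI] dvd_trans by blast
    with nd show False ..
  qed
  ultimately have "is_unit m" by blast
  then obtain u where u: "1 = m * u" by (blast elim: dvdE)
  have "(u * a0) * F + (u * b0) * G = 1" using u unfolding ab0 by (simp add: algebra_simps)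
  then show ?thesis by blast
qed

lemma bezout_poly2:
  fixes f H :: "real poly poly"
  assumes irr: "irreducible f" and deg: "degree f \<noteq> 0" and ndvd: "\<not> f dvd H"
  obtains A B d where "d \<noteq> 0" "A * f + B * H = [:d:]"
proof -
  have irr': "irreducible (fract_poly f)" and cont: "content f = 1"
    using nonconst_poly_irreducible_iff[OF deg] irr by simp_all
  have nd: "\<not> fract_poly f dvd fract_poly H"
  proof
    assume "fract_poly f dvd fract_poly H"
    then have "f dvd H" by (rule fract_poly_dvdD[OF _ cont])
    with ndvd show False ..
  qed
  obtain a b where ab: "a * fract_poly f + b * fract_poly H = 1"
    using field_poly_bezout[OF irr' nd] by blast
  obtain ca a' where a': "a = smult ca (fract_poly a')" by (rule content_decompose_fract)
  obtain cb b' where b': "b = smult cb (fract_poly b')" by (rule content_decompose_fract)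
  obtain n1 d1 where nd1: "d1 \<noteq> 0" "ca = to_fract n1 / to_fract d1" by (rule fract_repr)
  obtain n2 d2 where nd2: "d2 \<noteq> 0" "cb = to_fract n2 / to_fract d2" by (rule fract_repr)
  have "smult (to_fract (d1 * d2)) (a * fract_poly f + b * fract_poly H) = smult (to_fract (d1 * d2)) 1"
    using ab by simp
  moreover have "smult (to_fract (d1 * d2)) (a * fract_poly f) = fract_poly (smult (n1 * d2) (a' * f))"
  proof -
    have s: "to_fract (d1 * d2) * ca = to_fract (n1 * d2)"
    proof -
      have "to_fract d1 \<noteq> 0" using nd1 by simp
      then show ?thesis unfolding nd1(2) by (simp add: field_simps)
    qed
    show ?thesis unfolding a' by (simp only: mult_smult_left smult_smult s fract_poly_smult fract_poly_mult)
  qed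
  moreover have "smult (to_fract (d1 * d2)) (b * fract_poly H) = fract_poly (smult (n2 * d1) (b' * H))"
  proof -
    have s: "to_fract (d1 * d2) * cb = to_fract (n2 * d1)"
    proof -
      have "to_fract d2 \<noteq> 0" using nd2 by simp
      then show ?thesis unfolding nd2(2) by (simp add: field_simps)
    qed
    show ?thesis unfolding b' by (simp only: mult_smult_left smult_smult s fract_poly_smult fract_poly_mult)
  qed
  moreover have "smult (to_fract (d1 * d2)) (1 :: real poly fract poly) = fract_poly [:d1 * d2:]"
    by (simp add: map_poly_pCons)
  ultimately have "fract_poly (smult (n1 * d2) (a' * f) + smult (n2 * d1) (b' * H)) = fract_poly [:d1 * d2:]"
    by (simp add: smult_add_right)
  then have "smult (n1 * d2) (a' * f) + smult (n2 * d1) (b' * H) = [:d1 * d2:]"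
    by (simp only: fract_poly_eq_iff)
  then have "smult (n1 * d2) a' * f + smult (n2 * d1) b' * H = [:d1 * d2:]" by simp
  moreover have "d1 * d2 \<noteq> 0" using nd1 nd2 by simp
  ultimately show ?thesis using that by blast
qed



lemma LP_shrink:
  assumes "LP T p \<delta> \<rho> w" "0 < \<delta>'" "\<delta>' \<le> \<delta>" "0 < \<rho>'" "\<rho>' \<le> \<rho>"
  shows "LP T p \<delta>' \<rho>' w"
proof -
  have sub: "ball (fst p) \<delta>' \<subseteq> ball (fst p) \<delta>" using assms(3) by (rule subset_ball)
  show ?thesis using assms(1,2,4,5) sub continuous_on_subset[OF LP_cont[OF assms(1)] sub]
    unfolding LP_def by (meson less_le_trans subsetD)
qed

lemma LP_transfer:
  assumes "LP T p \<delta> \<rho> w" "T \<subseteq> S"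
    "\<And>x y. x \<in> ball (fst p) \<delta> \<Longrightarrow> \<bar>y - snd p\<bar> < \<rho> \<Longrightarrow> (x, y) \<in> S \<Longrightarrow> (x, y) \<in> T"
  shows "LP S p \<delta> \<rho> w"
  using assms unfolding LP_def by blast

lemma sign_change_zero:
  fixes h :: "real \<Rightarrow> real"
  assumes c: "isCont h t" and d: "d > 0"
    and sc: "(\<forall>s\<in>{t - d<..<t}. h s > 0) \<and> (\<forall>s\<in>{t<..<t + d}. h s < 0) \<or>
             (\<forall>s\<in>{t - d<..<t}. h s < 0) \<and> (\<forall>s\<in>{t<..<t + d}. h s > 0)"
  shows "h t = 0"
proof -
  have c': "(h \<longlongrightarrow> h t) (at t within UNIV)" using c unfolding isCont_def by simp
  have L: "(h \<longlongrightarrow> h t) (at_left t)" by (rule tendsto_within_subset[OF c' subset_UNIV])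
  have R: "(h \<longlongrightarrow> h t) (at_right t)" by (rule tendsto_within_subset[OF c' subset_UNIV])
  have evL: "eventually (\<lambda>s. s \<in> {t - d<..<t}) (at_left t)"
    unfolding eventually_at_left_field using d by (intro exI[of _ "t - d"]) auto
  have evR: "eventually (\<lambda>s. s \<in> {t<..<t + d}) (at_right t)"
    unfolding eventually_at_right_field using d by (intro exI[of _ "t + d"]) auto
  from sc show ?thesis
  proof
    assume A: "(\<forall>s\<in>{t - d<..<t}. h s > 0) \<and> (\<forall>s\<in>{t<..<t + d}. h s < 0)"
    have "0 \<le> h t" by (rule tendsto_lowerbound[OF L]) (use evL A in \<open>auto elim!: eventually_mono intro!: less_imp_le\<close>)
    moreover have "h t \<le> 0" by (rule tendsto_upperbound[OF R]) (use evR A in \<open>auto elim!: eventually_mono intro!: less_imp_le\<close>)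
    ultimately show ?thesis by simp
  next
    assume A: "(\<forall>s\<in>{t - d<..<t}. h s < 0) \<and> (\<forall>s\<in>{t<..<t + d}. h s > 0)"
    have "h t \<le> 0" by (rule tendsto_upperbound[OF L]) (use evL A in \<open>auto elim!: eventually_mono intro!: less_imp_le\<close>)
    moreover have "0 \<le> h t" by (rule tendsto_lowerbound[OF R]) (use evR A in \<open>auto elim!: eventually_mono intro!: less_imp_le\<close>)
    ultimately show ?thesis by simp
  qed
qed

lemma open_interval_repr:
  fixes J :: "real set"
  assumes op: "\<And>x. x \<in> J \<Longrightarrow> \<exists>d>0. ball x d \<subseteq> J" and conn: "connected J" and ne: "J \<noteq> {}"
    and bd: "\<And>x. x \<in> J \<Longrightarrow> \<bar>x - c\<bar> < r"
  shows "\<exists>a b. a < b \<and> J = {a<..<b}"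
proof -
  have bb: "bdd_below J" unfolding bdd_below_def using bd by (metis abs_less_iff less_eq_real_def minus_diff_eq neg_less_iff_less diff_less_eq add.commute le_diff_eq)
  have ba: "bdd_above J" unfolding bdd_above_def using bd by (metis abs_less_iff less_eq_real_def diff_less_eq add.commute)
  have lo: "Inf J < x" if xJ: "x \<in> J" for x
  proof -
    obtain d where "d > 0" "ball x d \<subseteq> J" using op[OF xJ] by blast
    then have "x - d/2 \<in> J" by (auto simp: dist_real_def)
    then have "Inf J \<le> x - d/2" using cInf_lower bb by blast
    then show ?thesis using \<open>d > 0\<close> by simp
  qed
  have hi: "x < Sup J" if xJ: "x \<in> J" for x
  proof -
    obtain d where "d > 0" "ball x d \<subseteq> J" using op[OF xJ] by blast
    then have "x + d/2 \<in> J" by (auto simp: dist_real_def)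
    then have "x + d/2 \<le> Sup J" using cSup_upper ba by blast
    then show ?thesis using \<open>d > 0\<close> by simp
  qed
  have iv: "is_interval J" using conn is_interval_connected_1 by blast
  have "J = {Inf J<..<Sup J}"
  proof
    show "J \<subseteq> {Inf J<..<Sup J}" using lo hi by auto
    show "{Inf J<..<Sup J} \<subseteq> J"
    proof
      fix x assume x: "x \<in> {Inf J<..<Sup J}"
      obtain u where u: "u \<in> J" "u < x" using x cInf_less_iff[OF ne bb] by auto
      obtain v where v: "v \<in> J" "x < v" using x less_cSup_iff[OF ne ba] by auto
      show "x \<in> J" using iv u v unfolding is_interval_1 by (meson less_imp_le)
    qed
  qed
  moreover obtain x0 where "x0 \<in> J" using ne by blast
  ultimately show ?thesis using lo hi by (metis order.strict_trans)
qed



theorem lemma2p6: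
  fixes f :: "real poly poly" and q e :: "real \<times> real" and r :: real
    and P :: "(real \<times> real) set"
  assumes irr: "irreducible f"
    and cpt: "compact (zero_set f)"
    and conn: "connected (zero_set f)"
    and q_sing: "singular_point f q"
    and r_pos: "r > 0"
    and no_other_sing: "\<forall>p\<in>zero_set f \<inter> ball q r. p \<noteq> q \<longrightarrow> \<not> singular_point f p"
    and partials_nz: "\<forall>p\<in>zero_set f \<inter> cball q r. p \<noteq> q \<longrightarrow>
                         eval2 (pdx f) p \<noteq> 0 \<and> eval2 (pdy f) p \<noteq> 0"
    and P_comp: "P \<in> components (zero_set f \<inter> (ball q r - {q}))"
    and endpoints: "closure P - P = {q, e}"
    and e_bdry: "e \<in> sphere q r"
  shows "\<exists>a b g. a < b \<and> P = {(x, g x) | x. x \<in> {a<..<b}} \<and>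
           real_analytic_on g {a<..<b} \<and>
           (\<forall>x\<in>{a<..<b}. deriv g x \<noteq> 0) \<and>
           finite {x. strict_inflection g {a<..<b} x}"
proof -
  define X where "X = zero_set f"
  have X_iff: "p \<in> X \<longleftrightarrow> gev f (fst p) (snd p) = 0" for p
    by (simp add: X_def zero_set_def eval2_gev)
  define S where "S = X \<inter> (ball q r - {q})"
  have PC: "P \<in> components S" using P_comp by (simp add: S_def X_def)
  have PS: "P \<subseteq> S" using PC in_components_subset by blast
  have Pconn: "connected P" using PC in_components_connected by blast
  have Pne: "P \<noteq> {}" using PC in_components_nonempty by blast
  define Fx where "Fx = map_poly pderiv f"
  define Fy where "Fy = pderiv f"
  have SX: "gev f (fst p) (snd p) = 0" if "p \<in> S" for p using that by (simp add: S_def X_iff)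
  have Fnz: "gev Fx (fst p) (snd p) \<noteq> 0 \<and> gev Fy (fst p) (snd p) \<noteq> 0" if pS: "p \<in> S" for p
  proof -
    have "p \<in> zero_set f \<inter> cball q r" "p \<noteq> q" using pS by (auto simp: S_def X_def)
    then have "eval2 (pdx f) p \<noteq> 0 \<and> eval2 (pdy f) p \<noteq> 0" using partials_nz by blast
    then show ?thesis by (simp add: eval2_gev pdx_def pdy_def Fx_def Fy_def)
  qed
  have LUW: "\<exists>\<delta> \<rho> W. LP S p \<delta> \<rho> (\<lambda>x. Re (W (of_real x))) \<and> W holomorphic_on ball (of_real (fst p)) \<delta>"
    if pS: "p \<in> S" for p
  proof -
    obtain x0 y0 where p: "p = (x0, y0)" by (cases p)
    have "open (ball q r - {q})" by (simp add: open_Diff)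
    moreover have "p \<in> ball q r - {q}" using pS by (simp add: S_def)
    ultimately obtain e where e: "e > 0" "ball p e \<subseteq> ball q r - {q}"
      unfolding open_contains_ball by blast
    have f0: "gev f x0 y0 = 0" using SX[OF pS] p by simp
    have fy: "gev (pderiv f) x0 y0 \<noteq> 0" using Fnz[OF pS] p by (simp add: Fy_def)
    obtain \<delta> \<rho> W where L: "LP ({p. gev f (fst p) (snd p) = 0} \<inter> ball (x0, y0) e) (x0, y0) \<delta> \<rho> (\<lambda>x. Re (W (of_real x)))"
      and H: "W holomorphic_on ball (of_real x0) \<delta>"
      by (rule local_box[OF f0 fy e(1)])
    have pos: "\<delta> > 0" "\<rho> > 0" using LP_pos[OF L] by auto
    define \<delta>' where "\<delta>' = min \<delta> (e/2)"
    define \<rho>' where "\<rho>' = min \<rho> (e/2)"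
    have L': "LP ({p. gev f (fst p) (snd p) = 0} \<inter> ball (x0, y0) e) (x0, y0) \<delta>' \<rho>' (\<lambda>x. Re (W (of_real x)))"
      by (rule LP_shrink[OF L]) (use pos e in \<open>auto simp: \<delta>'_def \<rho>'_def\<close>)
    have L'': "LP S (x0, y0) \<delta>' \<rho>' (\<lambda>x. Re (W (of_real x)))"
    proof (rule LP_transfer[OF L'])
      show "{p. gev f (fst p) (snd p) = 0} \<inter> ball (x0, y0) e \<subseteq> S"
        using e(2) p by (auto simp: S_def X_iff)
      fix x y assume xy: "x \<in> ball (fst (x0, y0)) \<delta>'" "\<bar>y - snd (x0, y0)\<bar> < \<rho>'" "(x, y) \<in> S"
      have "dist (x, y) (x0, y0) \<le> dist x x0 + dist y y0" by (rule dist_pair_le)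
      also have "\<dots> < e/2 + e/2"
      proof -
        have "\<bar>x - x0\<bar> < \<delta>'" using xy(1) by (simp only: fst_conv ball_real_iff)
        then have "\<bar>x - x0\<bar> < e/2" "\<bar>y - y0\<bar> < e/2" using xy(2) unfolding \<delta>'_def \<rho>'_def by auto
        then show ?thesis by (simp add: dist_real_def)
      qed
      finally have "(x, y) \<in> ball (x0, y0) e" by (simp add: dist_commute)
      then show "(x, y) \<in> {p. gev f (fst p) (snd p) = 0} \<inter> ball (x0, y0) e" using SX[OF xy(3)] by simp
    qed
    have H': "W holomorphic_on ball (of_real x0) \<delta>'"
      by (rule holomorphic_on_subset[OF H]) (simp add: \<delta>'_def subset_ball)
    show ?thesis using L'' H' p by auto
  qed
  have LU: "\<forall>p\<in>S. \<exists>\<delta> \<rho> w. LP S p \<delta> \<rho> w" using LUW by blast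
  obtain x0 y0 where p0: "(x0, y0) \<in> P" using Pne by auto
  define g where "g x = (THE y. (x, y) \<in> P)" for x
  have g_eq: "g x = y" if xyP: "(x, y) \<in> P" for x y
    unfolding g_def
  proof (rule the_equality[where P = "\<lambda>y. (x, y) \<in> P", OF xyP])
    fix y' assume "(x, y') \<in> P"
    then show "y' = y" using P_graph_unique[OF LU PC p0 _ xyP] by blast
  qed
  define J where "J = fst ` P"
  have gP: "(x, g x) \<in> P" if xJ: "x \<in> J" for x
  proof -
    obtain p where "p \<in> P" "x = fst p" using xJ J_def by blast
    then show ?thesis using g_eq[of "fst p" "snd p"] by simp
  qed
  have PJ: "P = {(x, g x) | x. x \<in> J}"
  proof
    show "P \<subseteq> {(x, g x) | x. x \<in> J}"
    proof
      fix p assume "p \<in> P"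
      then have "p = (fst p, g (fst p))" "fst p \<in> J" using g_eq[of "fst p" "snd p"] by (auto simp: J_def)
      then show "p \<in> {(x, g x) | x. x \<in> J}" by blast
    qed
    show "{(x, g x) | x. x \<in> J} \<subseteq> P" using gP by blast
  qed
  have LOC: "\<exists>\<delta>>0. \<exists>W. W holomorphic_on ball (of_real x1) \<delta> \<and> ball x1 \<delta> \<subseteq> J \<and>
        (\<forall>x\<in>ball x1 \<delta>. g x = Re (W (of_real x)))" if x1J: "x1 \<in> J" for x1
  proof -
    have pP: "(x1, g x1) \<in> P" by (rule gP[OF x1J])
    obtain \<delta> \<rho> W where L: "LP S (x1, g x1) \<delta> \<rho> (\<lambda>x. Re (W (of_real x)))"
      and H: "W holomorphic_on ball (of_real x1) \<delta>"
      using LUW[of "(x1, g x1)"] pP PS by auto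
    have sub: "(\<lambda>x. (x, Re (W (of_real x)))) ` ball x1 \<delta> \<subseteq> P"
      using P_local_graph[OF PC pP L] by simp
    have "ball x1 \<delta> \<subseteq> J" using sub unfolding J_def by force
    moreover have "\<forall>x\<in>ball x1 \<delta>. g x = Re (W (of_real x))" using sub g_eq by blast
    ultimately show ?thesis using LP_pos[OF L] H by blast
  qed
  have Jopen: "\<exists>d>0. ball x d \<subseteq> J" if "x \<in> J" for x using LOC[OF that] by blast
  have Jconn: "connected J" unfolding J_def
    by (rule connected_continuous_image[OF continuous_on_fst[OF continuous_on_id] Pconn])
  have Jne: "J \<noteq> {}" using Pne by (simp add: J_def)
  have Jbd: "\<bar>x - fst q\<bar> < r" if xJ: "x \<in> J" for x
  proof -
    obtain p where p: "p \<in> P" "x = fst p" using xJ J_def by blast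
    then have "dist q p < r" using PS by (auto simp: S_def)
    moreover have "dist (fst q) (fst p) \<le> dist q p" by (rule dist_fst_le)
    ultimately show ?thesis using p by (simp add: dist_real_def abs_minus_commute)
  qed
  obtain a b where ab: "a < b" "J = {a<..<b}" using open_interval_repr[OF Jopen Jconn Jne Jbd] by blast
  have openJ: "open J" using ab by simp
  have DG: "(g has_real_derivative deriv g t) (at t) \<and> (deriv g has_real_derivative deriv (deriv g) t) (at t)
      \<and> isCont (deriv (deriv g)) t" if tJ: "t \<in> J" for t
  proof -
    obtain \<delta> W where \<delta>: "\<delta> > 0" and H: "W holomorphic_on ball (of_real t) \<delta>"
      and BJ: "ball t \<delta> \<subseteq> J" and gW: "\<forall>x\<in>ball t \<delta>. g x = Re (W (of_real x))"
      using LOC[OF tJ] by blast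
    define B where "B = ball t \<delta>"
    have oB: "open B" by (simp add: B_def)
    have tB: "t \<in> B" using \<delta> by (simp add: B_def)
    have ofB: "complex_of_real s \<in> ball (of_real t) \<delta>" if "s \<in> B" for s
      using that by (simp only: B_def ball_of_real_iff ball_real_iff)
    have ob: "open (ball (complex_of_real t) \<delta>)" by simp
    have d1: "(g has_real_derivative Re (deriv W (of_real s))) (at s)" if sB: "s \<in> B" for s
      by (rule has_field_derivative_transform_within_open[OF re_holo_deriv[OF H ob ofB[OF sB]] oB sB])
         (use gW in \<open>simp add: B_def\<close>)
    have dg: "deriv g s = Re (deriv W (of_real s))" if "s \<in> B" for s
      by (rule DERIV_imp_deriv[OF d1[OF that]])
    have H1: "deriv W holomorphic_on ball (of_real t) \<delta>" by (rule holomorphic_deriv[OF H ob])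
    have d2: "(deriv g has_real_derivative Re (deriv (deriv W) (of_real s))) (at s)" if sB: "s \<in> B" for s
      by (rule has_field_derivative_transform_within_open[OF re_holo_deriv[OF H1 ob ofB[OF sB]] oB sB])
         (use dg in simp)
    have ddg: "deriv (deriv g) s = Re (deriv (deriv W) (of_real s))" if "s \<in> B" for s
      by (rule DERIV_imp_deriv[OF d2[OF that]])
    have H2: "deriv (deriv W) holomorphic_on ball (of_real t) \<delta>" by (rule holomorphic_deriv[OF H1 ob])
    have "isCont (\<lambda>s. Re (deriv (deriv W) (of_real s))) t"
      by (rule DERIV_isCont[OF re_holo_deriv[OF H2 ob ofB[OF tB]]])
    moreover have ev: "\<forall>\<^sub>F s in nhds t. deriv (deriv g) s = Re (deriv (deriv W) (of_real s))"
      unfolding eventually_nhds using oB tB ddg by blast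
    ultimately have "isCont (deriv (deriv g)) t" using isCont_cong[OF ev] by simp
    then show ?thesis using d1[OF tB] d2[OF tB] dg[OF tB] ddg[OF tB] by simp
  qed
  have analytic: "real_analytic_on g {a<..<b}"
    unfolding real_analytic_on_def
  proof
    fix x assume "x \<in> {a<..<b}"
    then have xJ: "x \<in> J" using ab by simp
    obtain \<delta> W where \<delta>: "\<delta> > 0" and H: "W holomorphic_on ball (of_real x) \<delta>"
      and gW: "\<forall>y\<in>ball x \<delta>. g y = Re (W (of_real y))"
      using LOC[OF xJ] by blast
    show "\<exists>d>0. \<exists>c. \<forall>y. \<bar>y - x\<bar> < d \<longrightarrow> (\<lambda>n. c n * (y - x) ^ n) sums g y"
    proof (intro exI[of _ \<delta>] conjI exI[of _ "\<lambda>n. Re ((deriv ^^ n) W (of_real x) / fact n)"] allI impI)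
      show "\<delta> > 0" by (fact \<delta>)
      fix y assume y: "\<bar>y - x\<bar> < \<delta>"
      have "y \<in> ball x \<delta>" using y by (simp only: ball_real_iff)
      then have "g y = Re (W (of_real y))" using gW by blast
      then show "(\<lambda>n. Re ((deriv ^^ n) W (of_real x) / fact n) * (y - x) ^ n) sums g y"
        using re_holo_series[OF H y] by simp
    qed
  qed
  have inP: "(t, g t) \<in> S" if "t \<in> J" for t using gP[OF that] PS by blast
  have zeroJ: "gev f s (g s) = 0" if "s \<in> J" for s using SX[OF inP[OF that]] by simp
  have E1: "gev Fx t (g t) + gev Fy t (g t) * deriv g t = 0" if tJ: "t \<in> J" for t
  proof -
    have "((\<lambda>s. gev f s (g s)) has_real_derivative gev Fx t (g t) + gev Fy t (g t) * deriv g t) (at t)"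
      unfolding Fx_def Fy_def by (rule gev_deriv_chain) (use DG[OF tJ] in blast)
    moreover have "((\<lambda>s. gev f s (g s)) has_real_derivative 0) (at t)"
      by (rule has_field_derivative_transform_within_open[OF DERIV_const openJ tJ]) (simp add: zeroJ)
    ultimately show ?thesis by (rule DERIV_unique)
  qed
  have dnz: "deriv g t \<noteq> 0" if tJ: "t \<in> J" for t
    using E1[OF tJ] Fnz[OF inP[OF tJ]] by auto
  define Fxx where "Fxx = map_poly pderiv Fx"
  define Fxy where "Fxy = pderiv Fx"
  define Fyx where "Fyx = map_poly pderiv Fy"
  define Fyy where "Fyy = pderiv Fy"
  define Hp where "Hp = Fxx * Fy ^ 2 - (Fxy + Fyx) * Fx * Fy + Fyy * Fx ^ 2"
  have E2: "gev Hp t (g t) + gev Fy t (g t) ^ 3 * deriv (deriv g) t = 0" if tJ: "t \<in> J" for t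
  proof -
    have dg1: "(g has_real_derivative deriv g t) (at t)" using DG[OF tJ] by blast
    have dg2: "(deriv g has_real_derivative deriv (deriv g) t) (at t)" using DG[OF tJ] by blast
    have "((\<lambda>s. gev Fx s (g s) + gev Fy s (g s) * deriv g s) has_real_derivative
       (gev Fxx t (g t) + gev Fxy t (g t) * deriv g t) +
       ((gev Fyx t (g t) + gev Fyy t (g t) * deriv g t) * deriv g t + deriv (deriv g) t * gev Fy t (g t))) (at t)"
      unfolding Fxx_def Fxy_def Fyx_def Fyy_def
      by (rule DERIV_add[OF gev_deriv_chain[OF dg1] DERIV_mult[OF gev_deriv_chain[OF dg1] dg2]])
    moreover have "((\<lambda>s. gev Fx s (g s) + gev Fy s (g s) * deriv g s) has_real_derivative 0) (at t)"
      by (rule has_field_derivative_transform_within_open[OF DERIV_const openJ tJ]) (simp add: E1)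
    ultimately have K: "(gev Fxx t (g t) + gev Fxy t (g t) * deriv g t) +
       ((gev Fyx t (g t) + gev Fyy t (g t) * deriv g t) * deriv g t + deriv (deriv g) t * gev Fy t (g t)) = 0"
      by (rule DERIV_unique)
    define u where "u = gev Fx t (g t)"
    define v where "v = gev Fy t (g t)"
    define pp where "pp = deriv g t"
    define ss where "ss = deriv (deriv g) t"
    have u: "u = - (v * pp)" using E1[OF tJ] by (simp add: u_def v_def pp_def algebra_simps)
    have "gev Hp t (g t) + v ^ 3 * ss = v ^ 2 * ((gev Fxx t (g t) + gev Fxy t (g t) * pp) +
       ((gev Fyx t (g t) + gev Fyy t (g t) * pp) * pp + ss * v))"
      by (simp add: Hp_def u[unfolded u_def] v_def[symmetric] algebra_simps power2_eq_square power3_eq_cube)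
    also have "\<dots> = 0" using K by (simp add: pp_def ss_def v_def)
    finally show ?thesis by (simp add: v_def ss_def)
  qed
  have infl: "gev Hp t (g t) = 0 \<and> t \<in> J \<and> (\<exists>d>0. {t - d<..<t + d} \<subseteq> J \<and>
      ((\<forall>s\<in>{t - d<..<t}. deriv (deriv g) s > 0) \<and> (\<forall>s\<in>{t<..<t + d}. deriv (deriv g) s < 0) \<or>
       (\<forall>s\<in>{t - d<..<t}. deriv (deriv g) s < 0) \<and> (\<forall>s\<in>{t<..<t + d}. deriv (deriv g) s > 0)))"
    if "strict_inflection g {a<..<b} t" for t
  proof -
    from that obtain d where tJ: "t \<in> J" and d: "d > 0" "{t - d<..<t + d} \<subseteq> J"
      and sc: "(\<forall>s\<in>{t - d<..<t}. deriv (deriv g) s > 0) \<and> (\<forall>s\<in>{t<..<t + d}. deriv (deriv g) s < 0) \<or>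
       (\<forall>s\<in>{t - d<..<t}. deriv (deriv g) s < 0) \<and> (\<forall>s\<in>{t<..<t + d}. deriv (deriv g) s > 0)"
      unfolding strict_inflection_def ab(2) by blast
    have "deriv (deriv g) t = 0"
      by (rule sign_change_zero[OF _ d(1) sc]) (use DG[OF tJ] in blast)
    then have "gev Hp t (g t) = 0" using E2[OF tJ] by simp
    then show ?thesis using tJ d sc by blast
  qed
  have fin: "finite {x. strict_inflection g {a<..<b} x}"
  proof (cases "f dvd Hp")
    case True
    then obtain k where k: "Hp = f * k" by blast
    have zero2: "deriv (deriv g) t = 0" if tJ: "t \<in> J" for t
    proof -
      have "gev Hp t (g t) = 0" using zeroJ[OF tJ] by (simp add: k)
      then have "gev Fy t (g t) ^ 3 * deriv (deriv g) t = 0" using E2[OF tJ] by simp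
      then show ?thesis using Fnz[OF inP[OF tJ]] by simp
    qed
    have "{x. strict_inflection g {a<..<b} x} = {}"
    proof (rule ccontr)
      assume "{x. strict_inflection g {a<..<b} x} \<noteq> {}"
      then obtain t where "strict_inflection g {a<..<b} t" by blast
      from infl[OF this] obtain d where d: "d > 0" "{t - d<..<t + d} \<subseteq> J"
        and sc: "(\<forall>s\<in>{t - d<..<t}. deriv (deriv g) s > 0) \<and> (\<forall>s\<in>{t<..<t + d}. deriv (deriv g) s < 0) \<or>
         (\<forall>s\<in>{t - d<..<t}. deriv (deriv g) s < 0) \<and> (\<forall>s\<in>{t<..<t + d}. deriv (deriv g) s > 0)"
        by blast
      have s1: "t - d/2 \<in> {t - d<..<t}" using d by simp
      then have "t - d/2 \<in> J" using d by auto
      then have "deriv (deriv g) (t - d/2) = 0" by (rule zero2)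
      moreover have "deriv (deriv g) (t - d/2) > 0 \<or> deriv (deriv g) (t - d/2) < 0"
        using sc s1 by blast
      ultimately show False by simp
    qed
    then show ?thesis by simp
  next
    case False
    have degf: "degree f \<noteq> 0"
    proof
      assume "degree f = 0"
      then obtain c where fc: "f = [:c:]" by (rule degree_eq_zeroE)
      have "eval2 f q = 0" using q_sing by (simp add: singular_point_def)
      then have cq: "poly c (fst q) = 0" by (simp add: eval2_gev fc)
      have "bounded (zero_set f)" using cpt compact_imp_bounded by blast
      then obtain B where B: "\<forall>p\<in>zero_set f. norm p \<le> B" unfolding bounded_iff by blast
      have "(fst q, \<bar>B\<bar> + 1) \<in> zero_set f" using cq by (simp add: zero_set_def eval2_gev fc)
      then have "norm (fst q, \<bar>B\<bar> + 1) \<le> B" using B by blast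
      moreover have "norm (\<bar>B\<bar> + 1) \<le> norm (fst q, \<bar>B\<bar> + 1)" by (rule norm_snd_le)
      ultimately show False by simp
    qed
    obtain A B d0 where d0: "d0 \<noteq> 0" "A * f + B * Hp = [:d0:]"
      by (rule bezout_poly2[OF irr degf False])
    have "{x. strict_inflection g {a<..<b} x} \<subseteq> {x. poly d0 x = 0}"
    proof
      fix t assume "t \<in> {x. strict_inflection g {a<..<b} x}"
      then have H0: "gev Hp t (g t) = 0" and tJ: "t \<in> J" using infl by auto
      have "poly d0 t = gev (A * f + B * Hp) t (g t)" using d0(2) by simp
      also have "\<dots> = 0" using H0 zeroJ[OF tJ] by simp
      finally show "t \<in> {x. poly d0 x = 0}" by simp
    qed
    moreover have "finite {x. poly d0 x = 0}" by (rule poly_roots_finite[OF d0(1)])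
    ultimately show ?thesis by (rule finite_subset)
  qed
  show ?thesis
  proof (rule exI[of _ a], rule exI[of _ b], rule exI[of _ g], intro conjI)
    show "a < b" by (fact ab(1))
    show "P = {(x, g x) | x. x \<in> {a<..<b}}" using PJ ab(2) by simp
    show "real_analytic_on g {a<..<b}" by (fact analytic)
    show "\<forall>x\<in>{a<..<b}. deriv g x \<noteq> 0" using dnz ab(2) by simp
    show "finite {x. strict_inflection g {a<..<b} x}" by (fact fin)
  qed
qed


end
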